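(* There is a constant $c$ such that the following holds. Let $n\in\mathbb N$, $f:\mathbb B^n\to\mathbb B$, and let $X\in\mathrm{IS}_{br}$ compute $f$. Then there exists $Y\in\mathrm{IS}_{br}$ in which the basic instruction $\mathrm{out}.\mathrm{set}{:}F$ does not occur (in any plain, positive test or negative test instruction) such that $Y$ computes $f$ and $|Y|\le c\cdot|X|$.
   Context: $\mathbb B=\{T,F\}$. A primitive instruction is one of: a plain basic instruction $a$, a positive test instruction $+a$, a negative test instruction $-a$ (for a basic instruction $a$), a forward jump instruction $\#l$ ($l\in\mathbb N$), or the termination instruction $!$. An instruction sequence is a finite nonempty sequence $X=u_1;\dots;u_k$ of primitive instructions; its length is $|X|=k$. Basic instructions have the form $f.m$ where the focus $f$ is one of $\mathrm{in}{:}i$, $\mathrm{aux}{:}i$ ($i\ge 1$) or $\mathrm{out}$, each naming a Boolean register, and the method $m$ is one of $\mathrm{set}{:}T$, $\mathrm{set}{:}F$, $\mathrm{get}$. Executing $f.\mathrm{set}{:}b$ sets register $f$ to $b$ and yields reply $b$; executing $f.\mathrm{get}$ leaves the register unchanged and yields its content as reply. Execution of $X=u_1;\dots;u_k$: a counter starts at $1$. If the counter exceeds $k$, execution deadlocks. At position $i$: if $u_i=!$, execution terminates; if $u_i=\#l$, execution deadlocks if $l=0$ and otherwise the counter becomes $i+l$; if $u_i$ is $a$, $+a$ or $-a$, the basic instruction $a$ is executed yielding reply $r$, and the counter becomes $i+1$ for $u_i=a$; for $u_i=+a$ it becomes $i+1$ if $r=T$ and $i+2$ if $r=F$; for $u_i=-a$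 it becomes $i+1$ if $r=F$ and $i+2$ if $r=T$. $\mathrm{IS}_{br}$ is the set of instruction sequences in which every basic instruction occurring belongs to $\{f.\mathrm{get}: f=\mathrm{in}{:}i \text{ or } f=\mathrm{aux}{:}i\}\cup\{f.\mathrm{set}{:}b: f=\mathrm{aux}{:}i \text{ or } f=\mathrm{out},\ b\in\mathbb B\}$. $X\in\mathrm{IS}_{br}$ computes $f:\mathbb B^n\to\mathbb B$ if for every $(b_1,\dots,b_n)\in\mathbb B^n$: when $X$ is executed with register $\mathrm{in}{:}j$ initialised to $b_j$ ($j\le n$) and all registers $\mathrm{aux}{:}i$ and $\mathrm{out}$ initialised to $F$, execution terminates (does not deadlock) without ever executing a basic instruction with focus $\mathrm{in}{:}j$ for $j>n$, and at termination register $\mathrm{out}$ contains $f(b_1,\dots,b_n)$. *)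

theory Defs
  imports Main
begin

datatype focus = In nat | Aux nat | Out

datatype meth = SetM bool | Get

datatype basic = BI focus meth

datatype prim = Plain basic | Pos basic | Neg basic | Jump nat | Term

type_synonym state = "focus \<Rightarrow> bool"

fun bfocus :: "basic \<Rightarrow> focus" where
  "bfocus (BI f m) = f"

fun do_basic :: "basic \<Rightarrow> state \<Rightarrow> state \<times> bool" where
  "do_basic (BI f (SetM b)) s = (s(f := b), b)"
| "do_basic (BI f Get) s = (s, s f)"

text \<open>Execution of the instruction sequence X from position i (1-based) in state s.
  Result: the set of foci of all basic instructions executed, and
  Some final state on termination, None on deadlock.\<close>
function exec :: "prim list \<Rightarrow> nat \<Rightarrow> state \<Rightarrow> focus set \<times> state option" where
  "exec X i s =
    (if i = 0 \<or> length X < i then ({}, None) else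
     (case X ! (i - 1) of
        Term \<Rightarrow> ({}, Some s)
      | Jump l \<Rightarrow> (if l = 0 then ({}, None) else exec X (i + l) s)
      | Plain a \<Rightarrow>
          (let (s', r) = do_basic a s; (Fs, res) = exec X (i + 1) s'
           in (insert (bfocus a) Fs, res))
      | Pos a \<Rightarrow>
          (let (s', r) = do_basic a s; (Fs, res) = exec X (if r then i + 1 else i + 2) s'
           in (insert (bfocus a) Fs, res))
      | Neg a \<Rightarrow>
          (let (s', r) = do_basic a s; (Fs, res) = exec X (if r then i + 2 else i + 1) s'
           in (insert (bfocus a) Fs, res))))"
  by pat_completeness auto
termination
  by (relation "measure (\<lambda>(X, i, s). Suc (length X) - i)") auto

fun basic_of :: "prim \<Rightarrow> basic option" where
  "basic_of (Plain a) = Some a"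
| "basic_of (Pos a) = Some a"
| "basic_of (Neg a) = Some a"
| "basic_of _ = None"

text \<open>Allowed basic instructions of IS_br (register indices start at 1).\<close>
fun br_basic :: "basic \<Rightarrow> bool" where
  "br_basic (BI (In i) Get) = (i \<ge> 1)"
| "br_basic (BI (Aux i) Get) = (i \<ge> 1)"
| "br_basic (BI (Aux i) (SetM b)) = (i \<ge> 1)"
| "br_basic (BI Out (SetM b)) = True"
| "br_basic _ = False"

definition IS_br :: "prim list \<Rightarrow> bool" where
  "IS_br X \<longleftrightarrow> X \<noteq> [] \<and> (\<forall>u \<in> set X. \<forall>a. basic_of u = Some a \<longrightarrow> br_basic a)"

text \<open>Initial state for input bs = (b_1,...,b_n): in:j holds b_j for 1 \<le> j \<le> n,
  all other registers F (in:j for j>n are never accessed anyway).\<close>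
definition init :: "bool list \<Rightarrow> state" where
  "init bs = (\<lambda>f. case f of In j \<Rightarrow> (1 \<le> j \<and> j \<le> length bs \<and> bs ! (j - 1)) | _ \<Rightarrow> False)"

definition computes :: "prim list \<Rightarrow> nat \<Rightarrow> (bool list \<Rightarrow> bool) \<Rightarrow> bool" where
  "computes X n f \<longleftrightarrow>
     (\<forall>bs. length bs = n \<longrightarrow>
        (case exec X 1 (init bs) of (Fs, res) \<Rightarrow>
           res \<noteq> None \<and> (\<forall>j. In j \<in> Fs \<longrightarrow> j \<le> n) \<and> the res Out = f bs))"

end

theory Submission
  imports Defs
begin

declare exec.simps[simp del]

definition gf :: "focus \<Rightarrow> focus" where
  "gf f = (case f of In j \<Rightarrow> In j | Aux i \<Rightarrow> Aux (Suc (Suc i)) | Out \<Rightarrow> Aux 1)"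

fun gb :: "basic \<Rightarrow> basic" where
  "gb (BI f m) = BI (gf f) m"

definition tr :: "nat \<Rightarrow> nat \<Rightarrow> prim \<Rightarrow> prim" where
  "tr n i u = (case u of Plain a \<Rightarrow> Plain (gb a) | Pos a \<Rightarrow> Pos (gb a) | Neg a \<Rightarrow> Neg (gb a)
     | Jump l \<Rightarrow> Jump l | Term \<Rightarrow> Jump (Suc n - i))"

definition endb :: "prim list" where
  "endb = [Pos (BI (Aux 1) Get), Plain (BI Out (SetM True)), Term]"

definition Yof :: "prim list \<Rightarrow> prim list" where
  "Yof X = map (\<lambda>i. tr (length X) (Suc i) (X ! i)) [0..<length X] @ endb"

definition rel :: "state \<Rightarrow> state \<Rightarrow> bool" where
  "rel s s' \<longleftrightarrow> (\<forall>f. s' (gf f) = s f) \<and> s' Out = False"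

lemma gf_inj: "gf f = gf g \<longleftrightarrow> f = g"
  by (cases f; cases g; simp add: gf_def)

lemma gf_Out: "gf f \<noteq> Out"
  by (cases f; simp add: gf_def)

lemma gf_In: "gf f = In j \<longleftrightarrow> f = In j"
  by (cases f; simp add: gf_def)

lemma gf_In2: "In j = gf f \<longleftrightarrow> f = In j"
  using gf_In by metis

lemma len_Y: "length (Yof X) = length X + 3"
  by (simp add: Yof_def endb_def)

lemma nth_Y: "1 \<le> i \<Longrightarrow> i \<le> length X \<Longrightarrow> Yof X ! (i - 1) = tr (length X) i (X ! (i - 1))"
proof -
  assume a: "1 \<le> i" "i \<le> length X"
  then obtain k where k: "i = Suc k" by (cases i) auto
  have "k < length X" using a k by simp
  then show ?thesis unfolding k by (simp add: Yof_def nth_append)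
qed

lemma nth_Y_end:
  "Yof X ! length X = Pos (BI (Aux 1) Get)"
  "Yof X ! Suc (length X) = Plain (BI Out (SetM True))"
  "Yof X ! Suc (Suc (length X)) = Term"
  by (simp_all add: Yof_def nth_append endb_def)

lemma do_rel:
  assumes "rel s s'" "do_basic a s = (s1, r)"
  shows "\<exists>s1'. do_basic (gb a) s' = (s1', r) \<and> rel s1 s1'"
proof (cases a)
  case (BI f m)
  show ?thesis
  proof (cases m)
    case (SetM b)
    have s1: "s1 = s(f := b)" "r = b" using assms(2) BI SetM by auto
    have "rel s1 (s'(gf f := b))"
      unfolding rel_def s1
    proof (intro conjI allI)
      fix g show "(s'(gf f := b)) (gf g) = (s(f := b)) g"
        using assms(1) unfolding rel_def by (simp only: fun_upd_apply gf_inj)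
    next
      have "Out \<noteq> gf f" using gf_Out by metis
      then show "(s'(gf f := b)) Out = False"
        using assms(1) unfolding rel_def by (simp only: fun_upd_apply) simp
    qed
    then show ?thesis using BI SetM s1 by simp
  next
    case Get
    have s1: "s1 = s" "r = s f" using assms(2) BI Get by auto
    have "s' (gf f) = s f" using assms(1) unfolding rel_def by blast
    then show ?thesis using assms(1) BI Get s1 by simp
  qed
qed

lemma end_run:
  assumes "rel s s'"
  shows "\<exists>Fs' t'. exec (Yof X) (Suc (length X)) s' = (Fs', Some t') \<and> (\<forall>j. In j \<notin> Fs') \<and> t' Out = s Out"
proof -
  have a1: "s' (Aux 1) = s Out" and o: "s' Out = False"
  proof -
    have "gf Out = Aux 1" by (simp add: gf_def)
    then show "s' (Aux 1) = s Out" "s' Out = False" using assms unfolding rel_def by metis+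
  qed
  have e3: "exec (Yof X) (Suc (Suc (Suc (length X)))) st = ({}, Some st)" for st
    by (subst exec.simps) (simp add: len_Y nth_Y_end)
  have e2: "exec (Yof X) (Suc (Suc (length X))) st = ({Out}, Some (st(Out := True)))" for st
    by (subst exec.simps) (simp add: len_Y nth_Y_end e3)
  have e1: "exec (Yof X) (Suc (length X)) s' =
     (if s' (Aux 1) then ({Aux 1, Out}, Some (s'(Out := True))) else ({Aux 1}, Some s'))"
    by (subst exec.simps) (simp add: len_Y nth_Y_end e3 e2 add.commute)
  show ?thesis using e1 a1 o by auto
qed

lemma step_Y:
  assumes "1 \<le> i" "i \<le> length X"
  shows "exec (Yof X) i s' = (case tr (length X) i (X ! (i - 1)) of
        Term \<Rightarrow> ({}, Some s')
      | Jump l \<Rightarrow> (if l = 0 then ({}, None) else exec (Yof X) (i + l) s')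
      | Plain a \<Rightarrow>
          (let (s2, r) = do_basic a s'; (Fs, res) = exec (Yof X) (i + 1) s2
           in (insert (bfocus a) Fs, res))
      | Pos a \<Rightarrow>
          (let (s2, r) = do_basic a s'; (Fs, res) = exec (Yof X) (if r then i + 1 else i + 2) s2
           in (insert (bfocus a) Fs, res))
      | Neg a \<Rightarrow>
          (let (s2, r) = do_basic a s'; (Fs, res) = exec (Yof X) (if r then i + 2 else i + 1) s2
           in (insert (bfocus a) Fs, res)))"
proof -
  have h: "Yof X ! (i - 1) = tr (length X) i (X ! (i - 1))" using nth_Y assms by blast
  have c: "\<not> (i = 0 \<or> length (Yof X) < i)" using assms len_Y by simp
  show ?thesis by (subst exec.simps) (simp only: c if_False h)
qed

lemma bfocus_gb: "bfocus (gb a) = gf (bfocus a)"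
  by (cases a) simp

lemma sim:
  "exec X i s = (Fs, Some t) \<Longrightarrow> rel s s' \<Longrightarrow>
   \<exists>Fs' t'. exec (Yof X) i s' = (Fs', Some t') \<and> (\<forall>j. In j \<in> Fs' \<longrightarrow> In j \<in> Fs) \<and> t' Out = t Out"
proof (induction "Suc (length X) - i" arbitrary: i s s' Fs t rule: less_induct)
  case less
  have i1: "1 \<le> i \<and> i \<le> length X"
  proof (rule ccontr)
    assume "\<not> ?thesis"
    then have "exec X i s = ({}, None)" by (subst exec.simps) auto
    with less.prems show False by simp
  qed
  have eX: "exec X i s = (case X ! (i - 1) of
        Term \<Rightarrow> ({}, Some s)
      | Jump l \<Rightarrow> (if l = 0 then ({}, None) else exec X (i + l) s)
      | Plain a \<Rightarrow>
          (let (s2, r) = do_basic a s; (Fs, res) = exec X (i + 1) s2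
           in (insert (bfocus a) Fs, res))
      | Pos a \<Rightarrow>
          (let (s2, r) = do_basic a s; (Fs, res) = exec X (if r then i + 1 else i + 2) s2
           in (insert (bfocus a) Fs, res))
      | Neg a \<Rightarrow>
          (let (s2, r) = do_basic a s; (Fs, res) = exec X (if r then i + 2 else i + 1) s2
           in (insert (bfocus a) Fs, res)))"
  proof -
    have c: "\<not> (i = 0 \<or> length X < i)" using i1 by simp
    show ?thesis by (subst exec.simps) (simp only: c if_False)
  qed
  note eY = step_Y[OF conjunct1[OF i1] conjunct2[OF i1], of s']
  note ih = less.hyps
  have dec: "\<And>k. k > 0 \<Longrightarrow> Suc (length X) - (i + k) < Suc (length X) - i" using i1 by arith
  show ?case
  proof (cases "X ! (i - 1)")
    case Term
    then have "t = s" using less.prems(1) eX by simp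
    moreover have "exec (Yof X) i s' = exec (Yof X) (Suc (length X)) s'"
      using eY Term i1 by (simp add: tr_def)
    ultimately show ?thesis using end_run[OF less.prems(2), of X] by auto
  next
    case (Jump l)
    then have l0: "l \<noteq> 0" and e: "exec X (i + l) s = (Fs, Some t)"
      using less.prems(1) eX by (auto split: if_splits)
    have "exec (Yof X) i s' = exec (Yof X) (i + l) s'"
      using eY Jump l0 by (simp add: tr_def)
    then show ?thesis using ih[OF dec e less.prems(2)] l0 by auto
  next
    case (Plain a)
    obtain s1 r where d: "do_basic a s = (s1, r)" by (cases "do_basic a s")
    obtain Fs1 res where e: "exec X (i + 1) s1 = (Fs1, res)" by (cases "exec X (i + 1) s1")
    have r1: "res = Some t" "Fs = insert (bfocus a) Fs1"
      using less.prems(1) eX Plain d e by auto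
    obtain s1' where d': "do_basic (gb a) s' = (s1', r)" "rel s1 s1'"
      using do_rel[OF less.prems(2) d] by blast
    obtain Fs1' t' where e': "exec (Yof X) (i + 1) s1' = (Fs1', Some t')"
      "\<forall>j. In j \<in> Fs1' \<longrightarrow> In j \<in> Fs1" "t' Out = t Out"
      using ih[OF dec[of 1] e[unfolded r1(1)] d'(2)] by auto
    have "exec (Yof X) i s' = (insert (gf (bfocus a)) Fs1', Some t')"
      using eY Plain d' e' by (simp add: tr_def bfocus_gb)
    then show ?thesis using e' r1 by (auto simp: gf_In gf_In2)
  next
    case (Pos a)
    obtain s1 r where d: "do_basic a s = (s1, r)" by (cases "do_basic a s")
    define k where "k = (if r then 1 else 2::nat)"
    have k0: "k > 0" by (simp add: k_def)
    have ik: "(if r then i + 1 else i + 2) = i + k" by (simp add: k_def)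
    obtain Fs1 res where e: "exec X (i + k) s1 = (Fs1, res)" by (cases "exec X (i + k) s1")
    have r1: "res = Some t" "Fs = insert (bfocus a) Fs1"
      using less.prems(1) eX Pos d e ik by auto
    obtain s1' where d': "do_basic (gb a) s' = (s1', r)" "rel s1 s1'"
      using do_rel[OF less.prems(2) d] by blast
    obtain Fs1' t' where e': "exec (Yof X) (i + k) s1' = (Fs1', Some t')"
      "\<forall>j. In j \<in> Fs1' \<longrightarrow> In j \<in> Fs1" "t' Out = t Out"
      using ih[OF dec[OF k0] e[unfolded r1(1)] d'(2)] by auto
    have "exec (Yof X) i s' = (insert (gf (bfocus a)) Fs1', Some t')"
      using eY Pos d' e' ik by (simp add: tr_def bfocus_gb)
    then show ?thesis using e' r1 by (auto simp: gf_In gf_In2)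
  next
    case (Neg a)
    obtain s1 r where d: "do_basic a s = (s1, r)" by (cases "do_basic a s")
    define k where "k = (if r then 2 else 1::nat)"
    have k0: "k > 0" by (simp add: k_def)
    have ik: "(if r then i + 2 else i + 1) = i + k" by (simp add: k_def)
    obtain Fs1 res where e: "exec X (i + k) s1 = (Fs1, res)" by (cases "exec X (i + k) s1")
    have r1: "res = Some t" "Fs = insert (bfocus a) Fs1"
      using less.prems(1) eX Neg d e ik by auto
    obtain s1' where d': "do_basic (gb a) s' = (s1', r)" "rel s1 s1'"
      using do_rel[OF less.prems(2) d] by blast
    obtain Fs1' t' where e': "exec (Yof X) (i + k) s1' = (Fs1', Some t')"
      "\<forall>j. In j \<in> Fs1' \<longrightarrow> In j \<in> Fs1" "t' Out = t Out"
      using ih[OF dec[OF k0] e[unfolded r1(1)] d'(2)] by auto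
    have "exec (Yof X) i s' = (insert (gf (bfocus a)) Fs1', Some t')"
      using eY Neg d' e' ik by (simp add: tr_def bfocus_gb)
    then show ?thesis using e' r1 by (auto simp: gf_In gf_In2)
  qed
qed

lemma br_gb: "br_basic a \<Longrightarrow> br_basic (gb a)"
  apply (cases a)
  subgoal for f m by (cases f; cases m; simp add: gf_def)
  done

lemma gb_not_out: "gb a \<noteq> BI Out (SetM False)"
  by (cases a) (simp add: gf_Out)

lemma basic_of_tr: "basic_of (tr n i u) = Some b \<Longrightarrow> \<exists>a. basic_of u = Some a \<and> b = gb a"
  by (cases u) (auto simp: tr_def)

theorem theorem4:
  shows "\<exists>c::nat. \<forall>n (f :: bool list \<Rightarrow> bool) X.
           IS_br X \<and> computes X n f \<longrightarrow>
           (\<exists>Y. IS_br Y \<and>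
                (\<forall>u \<in> set Y. basic_of u \<noteq> Some (BI Out (SetM False))) \<and>
                computes Y n f \<and> length Y \<le> c * length X)"
proof (intro exI[of _ 4] allI impI, elim conjE)
  fix n f X
  assume br: "IS_br X" and cp: "computes X n f"
  have ne: "X \<noteq> []" using br by (simp add: IS_br_def)
  have setY: "u \<in> set (Yof X) \<Longrightarrow> (\<exists>i < length X. u = tr (length X) (Suc i) (X ! i)) \<or> u \<in> set endb" for u
    by (auto simp: Yof_def)
  show "\<exists>Y. IS_br Y \<and> (\<forall>u \<in> set Y. basic_of u \<noteq> Some (BI Out (SetM False))) \<and>
                computes Y n f \<and> length Y \<le> 4 * length X"
  proof (intro exI[of _ "Yof X"] conjI)
    show "IS_br (Yof X)"
      unfolding IS_br_def
    proof (intro conjI ballI allI impI)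
      show "Yof X \<noteq> []" by (simp add: Yof_def endb_def)
    next
      fix u b assume u: "u \<in> set (Yof X)" and b: "basic_of u = Some b"
      from setY[OF u] show "br_basic b"
      proof
        assume "\<exists>i < length X. u = tr (length X) (Suc i) (X ! i)"
        then obtain i where i: "i < length X" "u = tr (length X) (Suc i) (X ! i)" by blast
        obtain a where a: "basic_of (X ! i) = Some a" "b = gb a"
          using basic_of_tr b i(2) by blast
        have "br_basic a" using br a(1) i(1) unfolding IS_br_def by (meson nth_mem)
        then show ?thesis using a(2) br_gb by simp
      next
        assume "u \<in> set endb" then show ?thesis using b by (auto simp: endb_def)
      qed
    qed
  next
    show "\<forall>u \<in> set (Yof X). basic_of u \<noteq> Some (BI Out (SetM False))"
    proof
      fix u assume u: "u \<in> set (Yof X)"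
      from setY[OF u] show "basic_of u \<noteq> Some (BI Out (SetM False))"
      proof
        assume "\<exists>i < length X. u = tr (length X) (Suc i) (X ! i)"
        then obtain i where i: "u = tr (length X) (Suc i) (X ! i)" by blast
        show ?thesis
        proof
          assume "basic_of u = Some (BI Out (SetM False))"
          then obtain a where "BI Out (SetM False) = gb a" using basic_of_tr i by blast
          then show False using gb_not_out by metis
        qed
      next
        assume "u \<in> set endb" then show ?thesis by (auto simp: endb_def)
      qed
    qed
  next
    show "computes (Yof X) n f"
      unfolding computes_def
    proof (intro allI impI)
      fix bs :: "bool list" assume lb: "length bs = n"
      obtain Fs res where e: "exec X 1 (init bs) = (Fs, res)" by (cases "exec X 1 (init bs)")
      have c0: "case exec X 1 (init bs) of (Fs, res) \<Rightarrow>
           res \<noteq> None \<and> (\<forall>j. In j \<in> Fs \<longrightarrow> j \<le> n) \<and> the res Out = f bs"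
        using spec[OF cp[unfolded computes_def], of bs] lb by (rule mp)
      then have c1: "res \<noteq> None" "\<forall>j. In j \<in> Fs \<longrightarrow> j \<le> n" "the res Out = f bs"
        unfolding e by simp_all
      obtain t where t: "res = Some t" using c1(1) by blast
      have rl: "rel (init bs) (init bs)"
        unfolding rel_def
      proof (intro conjI allI)
        fix g show "init bs (gf g) = init bs g" by (cases g) (simp_all add: gf_def init_def)
      qed (simp add: init_def)
      obtain Fs' t' where e': "exec (Yof X) 1 (init bs) = (Fs', Some t')"
        "\<forall>j. In j \<in> Fs' \<longrightarrow> In j \<in> Fs" "t' Out = t Out"
        using sim[OF e[unfolded t] rl] by blast
      show "case exec (Yof X) 1 (init bs) of (Fs, res) \<Rightarrow>
           res \<noteq> None \<and> (\<forall>j. In j \<in> Fs \<longrightarrow> j \<le> n) \<and> the res Out = f bs"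
        using e' c1 t by auto
    qed
  next
    show "length (Yof X) \<le> 4 * length X" using ne by (simp add: len_Y Suc_le_eq)
  qed
qed

end
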